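(* Let $F=f+p$ where $f:\mathbb{R}^n\to\mathbb{R}$ is convex and continuously differentiable with Lipschitz continuous gradient and $p:\mathbb{R}^n\to\mathbb{R}$ is convex. Let $\sigma>0$ and for each $k\ge0$ let $H_k=\sigma\mathbf I-u_ku_k^t$ with $\|u_k\|^2<\sigma$. Let $\{y^k\}$ be an arbitrary sequence in $\mathbb{R}^n$, let $\{\alpha^k\}$ satisfy $\alpha^k\in(0,1)$ and $\sum_{k=0}^\infty\alpha^k=\infty$, and let $\lambda^0=1$. For each $k$ let $$M_{H_k}(x,y^k)=f(y^k)+\langle\nabla f(y^k),x-y^k\rangle+\tfrac12(x-y^k)^tH_k(x-y^k)+p(x),$$ $x^\ast_{H_k}(y^k)=\arg\min_xM_{H_k}(x,y^k)$, $g^k=H_k(y^k-x^\ast_{H_k}(y^k))$, and assume $F(x^\ast_{H_k}(y^k))\le M_{H_k}(x^\ast_{H_k}(y^k),y^k)$ for all $k$. Let $\phi^0:\mathbb{R}^n\to\mathbb{R}$ be any function and define $$\lambda^{k+1}=(1-\alpha^k)\lambda^k,\qquad \phi^{k+1}(x)=(1-\alpha^k)\phi^k(x)+\alpha^k\Big[F(x^\ast_{H_k}(y^k))+\langle g^k,x-y^k\rangle+\tfrac{1}{2\sigma}\|g^k\|^2\Big].$$ Then $(\{\phi^k\},\{\lambda^k\})$ is an estimate sequence of $F$.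
   Context: A pair of sequences $\{\phi^k(x)\}$ and $\{\lambda^k\}$ with $\lambda^k\ge0$ is called an estimate sequence of a function $F$ if $\lambda^k\to0$ and for every $x\in\mathbb{R}^n$ and all $k\ge0$, $\phi^k(x)\le(1-\lambda^k)F(x)+\lambda^k\phi^0(x)$. *)

theory Defs
  imports "HOL-Analysis.Analysis"
begin

definition estimate_sequence ::
  "('a \<Rightarrow> real) \<Rightarrow> (nat \<Rightarrow> 'a \<Rightarrow> real) \<Rightarrow> (nat \<Rightarrow> real) \<Rightarrow> bool" where
  "estimate_sequence F phi lam \<longleftrightarrow>
     (\<forall>k. lam k \<ge> 0) \<and> lam \<longlonglongrightarrow> 0 \<and>
     (\<forall>x k. phi k x \<le> (1 - lam k) * F x + lam k * phi 0 x)"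

definition Hmat :: "real \<Rightarrow> real ^ 'n \<Rightarrow> real ^ 'n ^ 'n" where
  "Hmat \<sigma> u = \<sigma> *\<^sub>R mat 1 - (\<chi> i j. u $ i * u $ j)"

definition Mmodel ::
  "(real ^ 'n \<Rightarrow> real) \<Rightarrow> (real ^ 'n \<Rightarrow> real ^ 'n) \<Rightarrow> (real ^ 'n \<Rightarrow> real)
    \<Rightarrow> real ^ 'n ^ 'n \<Rightarrow> real ^ 'n \<Rightarrow> real ^ 'n \<Rightarrow> real" where
  "Mmodel f gradf p H x y =
     f y + gradf y \<bullet> (x - y) + (1/2) * ((x - y) \<bullet> (H *v (x - y))) + p x"

end

theory Submission
  imports Defs
begin

lemma Hmat_mult: "Hmat \<sigma> u *v v = \<sigma> *\<^sub>R v - (u \<bullet> v) *\<^sub>R u"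
proof -
  have 1: "(\<chi> i j. u $ i * u $ j) *v v = (u \<bullet> v) *\<^sub>R u"
    by (simp add: vec_eq_iff matrix_vector_mult_def inner_vec_def sum_distrib_left mult_ac)
  show ?thesis
    unfolding Hmat_def matrix_vector_mult_diff_rdistrib scaleR_matrix_vector_assoc[symmetric] 1
    by simp
qed

lemma tangent:
  fixes f :: "'a::real_normed_vector \<Rightarrow> real"
  assumes c: "convex_on UNIV f" and d: "(f has_derivative D) (at y)"
  shows "f x \<ge> f y + D (x - y)"
proof -
  define w where "w = x - y"
  define g where "g t = f (y + t *\<^sub>R w)" for t :: real
  have lin: "linear D" using d has_derivative_linear by blast
  have gc: "convex_on UNIV g"
    unfolding g_def
  proof (rule convex_onI)
    fix a t s :: real assume a: "0 < a" "a < 1"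
    have "y + ((1 - a) *\<^sub>R t + a *\<^sub>R s) *\<^sub>R w = (1 - a) *\<^sub>R (y + t *\<^sub>R w) + a *\<^sub>R (y + s *\<^sub>R w)"
      by (simp add: algebra_simps)
    then show "f (y + ((1 - a) *\<^sub>R t + a *\<^sub>R s) *\<^sub>R w) \<le> (1 - a) * f (y + t *\<^sub>R w) + a * f (y + s *\<^sub>R w)"
      using convex_onD[OF c, of a "y + t *\<^sub>R w" "y + s *\<^sub>R w"] a by simp
  qed simp
  have "((\<lambda>t. y + t *\<^sub>R w) has_derivative (\<lambda>h. h *\<^sub>R w)) (at 0)"
    by (auto intro!: derivative_eq_intros)
  from diff_chain_at[OF this, of f D] d
  have "(g has_derivative (\<lambda>h. D (h *\<^sub>R w))) (at 0)" by (simp add: g_def[abs_def] o_def)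
  then have gd: "(g has_field_derivative D w) (at 0)"
    by (rule has_derivative_imp_has_field_derivative) (simp add: linear_scale[OF lin])
  have "g 1 - g 0 \<ge> D w * (1 - 0)"
    by (rule convex_on_imp_above_tangent[OF gc]) (use gd in auto)
  moreover have "g 1 = f x" "g 0 = f y" by (simp_all add: g_def w_def)
  ultimately show ?thesis unfolding w_def by simp
qed

lemma small_t:
  fixes A B :: real
  assumes "\<And>t. 0 < t \<Longrightarrow> t \<le> 1 \<Longrightarrow> 0 \<le> A + t * B"
  shows "0 \<le> A"
proof (rule ccontr)
  assume n: "\<not> 0 \<le> A"
  define t where "t = min 1 (- A / (\<bar>B\<bar> + 1))"
  have "A / (\<bar>B\<bar> + 1) < 0" using n by (intro divide_neg_pos) auto
  then have t0: "0 < t" "t \<le> 1" by (auto simp: t_def)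
  have "t * \<bar>B\<bar> \<le> (- A / (\<bar>B\<bar> + 1)) * \<bar>B\<bar>"
    by (rule mult_right_mono) (auto simp: t_def)
  also have "\<dots> < - A" using n by (simp add: field_simps)
  finally have "t * \<bar>B\<bar> < -A" .
  moreover have "t * B \<le> t * \<bar>B\<bar>" using t0 by (intro mult_left_mono) auto
  ultimately have "t * B < -A" by linarith
  with assms[OF t0] show False by linarith
qed

lemma key:
  fixes f p :: "real ^ 'n \<Rightarrow> real" and gradf :: "real ^ 'n \<Rightarrow> real ^ 'n"
    and \<sigma> :: real and u y xs x :: "real ^ 'n"
  assumes f_convex: "convex_on UNIV f"
    and f_grad: "\<And>x. (f has_derivative (\<lambda>h. gradf x \<bullet> h)) (at x)"
    and p_convex: "convex_on UNIV p"
    and sigma_pos: "\<sigma> > 0"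
    and u_small: "(norm u)\<^sup>2 < \<sigma>"
    and argmin: "\<And>x. Mmodel f gradf p (Hmat \<sigma> u) xs y \<le> Mmodel f gradf p (Hmat \<sigma> u) x y"
    and FleM: "f xs + p xs \<le> Mmodel f gradf p (Hmat \<sigma> u) xs y"
  shows "f xs + p xs + (Hmat \<sigma> u *v (y - xs)) \<bullet> (x - y)
         + (1 / (2 * \<sigma>)) * (norm (Hmat \<sigma> u *v (y - xs)))\<^sup>2 \<le> f x + p x"
proof -
  define e where "e = xs - y"
  define w where "w = x - xs"
  define gy where "gy = gradf y"
  define ee where "ee = e \<bullet> e"
  define ue where "ue = u \<bullet> e"
  define uw where "uw = u \<bullet> w"
  define ew where "ew = e \<bullet> w"
  define ww where "ww = w \<bullet> w"
  define uu where "uu = u \<bullet> u"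
  define gw where "gw = gy \<bullet> w"
  define gye where "gye = gy \<bullet> e"
  have M: "Mmodel f gradf p (Hmat \<sigma> u) z y = f y + gy \<bullet> (z - y)
            + (1/2) * (\<sigma> * ((z - y) \<bullet> (z - y)) - (u \<bullet> (z - y))\<^sup>2) + p z" for z
    by (simp add: Mmodel_def Hmat_mult gy_def inner_diff_right inner_commute power2_eq_square)
  have Mxs: "Mmodel f gradf p (Hmat \<sigma> u) xs y = f y + gye + (1/2) * (\<sigma> * ee - ue\<^sup>2) + p xs"
    unfolding M by (simp add: gye_def ee_def ue_def e_def)
  have A: "0 \<le> gw + (\<sigma> * ew - ue * uw) + p x - p xs"
  proof (rule small_t[where B = "(1/2) * (\<sigma> * ww - uw\<^sup>2)"])
    fix t :: real assume t: "0 < t" "t \<le> 1"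
    define z where "z = xs + t *\<^sub>R w"
    have zc: "z = (1 - t) *\<^sub>R xs + t *\<^sub>R x" by (simp add: z_def w_def algebra_simps)
    have pz: "p z \<le> (1 - t) * p xs + t * p x"
      using convex_onD[OF p_convex, of t xs x] t unfolding zc by simp
    have zy: "z - y = e + t *\<^sub>R w" by (simp add: z_def e_def)
    have Mz: "Mmodel f gradf p (Hmat \<sigma> u) z y = f y + gye + t * gw
        + (1/2) * (\<sigma> * ee - ue\<^sup>2) + t * (\<sigma> * ew - ue * uw) + t\<^sup>2 * ((1/2) * (\<sigma> * ww - uw\<^sup>2)) + p z"
      unfolding M zy
      by (simp add: gye_def gw_def ee_def ue_def uw_def ew_def ww_def inner_add_left inner_add_right
          inner_commute power2_eq_square algebra_simps)
    from argmin[of z] have "0 \<le> t * gw + t * (\<sigma> * ew - ue * uw)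
        + t\<^sup>2 * ((1/2) * (\<sigma> * ww - uw\<^sup>2)) + p z - p xs"
      unfolding Mz Mxs by linarith
    with pz have "0 \<le> t * (gw + (\<sigma> * ew - ue * uw) + p x - p xs + t * ((1/2) * (\<sigma> * ww - uw\<^sup>2)))"
      by (simp add: algebra_simps power2_eq_square)
    then show "0 \<le> gw + (\<sigma> * ew - ue * uw) + p x - p xs + t * ((1/2) * (\<sigma> * ww - uw\<^sup>2))"
      using t by (simp add: zero_le_mult_iff)
  qed
  have T: "f x \<ge> f y + gw + gye"
    using tangent[OF f_convex f_grad[of y], of x]
    by (simp add: gw_def gye_def gy_def w_def e_def inner_diff_right)
  have g: "Hmat \<sigma> u *v (y - xs) = - (\<sigma> *\<^sub>R e - ue *\<^sub>R u)"
    by (simp add: Hmat_mult e_def ue_def inner_diff_right algebra_simps)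
  have gxy: "(Hmat \<sigma> u *v (y - xs)) \<bullet> (x - y) = - (\<sigma> * ew - ue * uw) - (\<sigma> * ee - ue\<^sup>2)"
  proof -
    have "x - y = w + e" by (simp add: w_def e_def)
    then show ?thesis unfolding g
      by (simp add: ew_def ee_def ue_def uw_def inner_add_right inner_diff_left inner_commute
          power2_eq_square algebra_simps)
  qed
  have gn: "(norm (Hmat \<sigma> u *v (y - xs)))\<^sup>2 = \<sigma>\<^sup>2 * ee - 2 * \<sigma> * ue\<^sup>2 + ue\<^sup>2 * uu"
    unfolding g power2_norm_eq_inner
    by (simp add: ee_def ue_def uu_def inner_diff_left inner_diff_right inner_commute
        power2_eq_square algebra_simps)
  have uu: "uu < \<sigma>" using u_small by (simp add: uu_def power2_norm_eq_inner)
  have q: "(1 / (2 * \<sigma>)) * (\<sigma>\<^sup>2 * ee - 2 * \<sigma> * ue\<^sup>2 + ue\<^sup>2 * uu) \<le> (1/2) * (\<sigma> * ee - ue\<^sup>2)"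
  proof -
    have "ue\<^sup>2 * uu \<le> ue\<^sup>2 * \<sigma>" using uu by (intro mult_left_mono) auto
    then have "\<sigma>\<^sup>2 * ee - 2 * \<sigma> * ue\<^sup>2 + ue\<^sup>2 * uu \<le> \<sigma> * (\<sigma> * ee - ue\<^sup>2)"
      by (simp add: power2_eq_square algebra_simps)
    then show ?thesis using sigma_pos by (simp add: field_simps)
  qed
  from FleM have F: "f xs + p xs \<le> f y + gye + (1/2) * (\<sigma> * ee - ue\<^sup>2) + p xs" unfolding Mxs .
  have fin: "\<And>a b c d X fx fy pxs px fxs. 0 \<le> gw + a + px - pxs \<Longrightarrow> fy + gw + gye \<le> fx
     \<Longrightarrow> fxs + pxs \<le> fy + gye + 1/2 * b + pxs \<Longrightarrow> X \<le> 1/2 * b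
     \<Longrightarrow> fxs + pxs + (- a - b) + X \<le> fx + px" by linarith
  show ?thesis unfolding gxy gn by (rule fin[OF A T F q])
qed


theorem lemma7:
  fixes f p :: "real ^ 'n \<Rightarrow> real"
    and gradf :: "real ^ 'n \<Rightarrow> real ^ 'n"
    and \<sigma> :: real
    and u y xs :: "nat \<Rightarrow> real ^ 'n"
    and \<alpha> lam :: "nat \<Rightarrow> real"
    and phi :: "nat \<Rightarrow> real ^ 'n \<Rightarrow> real"
  assumes f_convex: "convex_on UNIV f"
    and f_grad: "\<And>x. (f has_derivative (\<lambda>h. gradf x \<bullet> h)) (at x)"
    and grad_cont: "continuous_on UNIV gradf"
    and grad_lip: "\<exists>L. \<forall>x x'. norm (gradf x - gradf x') \<le> L * norm (x - x')"
    and p_convex: "convex_on UNIV p"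
    and sigma_pos: "\<sigma> > 0"
    and u_small: "\<And>k. (norm (u k))\<^sup>2 < \<sigma>"
    and alpha_range: "\<And>k. 0 < \<alpha> k \<and> \<alpha> k < 1"
    and alpha_div: "filterlim (\<lambda>n. \<Sum>k<n. \<alpha> k) at_top sequentially"
    and xs_argmin: "\<And>k x. Mmodel f gradf p (Hmat \<sigma> (u k)) (xs k) (y k)
                            \<le> Mmodel f gradf p (Hmat \<sigma> (u k)) x (y k)"
    and F_le_M: "\<And>k. f (xs k) + p (xs k) \<le> Mmodel f gradf p (Hmat \<sigma> (u k)) (xs k) (y k)"
    and lam0: "lam 0 = 1"
    and lam_rec: "\<And>k. lam (Suc k) = (1 - \<alpha> k) * lam k"
    and phi_rec: "\<And>k x. phi (Suc k) x = (1 - \<alpha> k) * phi k x + \<alpha> k *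
        (f (xs k) + p (xs k)
         + (Hmat \<sigma> (u k) *v (y k - xs k)) \<bullet> (x - y k)
         + (1 / (2 * \<sigma>)) * (norm (Hmat \<sigma> (u k) *v (y k - xs k)))\<^sup>2)"
  shows "estimate_sequence (\<lambda>x. f x + p x) phi lam"
proof -
  have keyk: "(f (xs k) + p (xs k) + (Hmat \<sigma> (u k) *v (y k - xs k)) \<bullet> (x - y k)
         + (1 / (2 * \<sigma>)) * (norm (Hmat \<sigma> (u k) *v (y k - xs k)))\<^sup>2) \<le> f x + p x" for k x
    using key[OF f_convex f_grad p_convex sigma_pos u_small xs_argmin F_le_M, of k x] by simp
  have lam_nn: "lam k \<ge> 0" for k
  proof (induction k)
    case 0 then show ?case using lam0 by simp
  next
    case (Suc k) then show ?case using lam_rec[of k] alpha_range[of k] by simp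
  qed
  have lam_le: "lam k \<le> exp (- (\<Sum>i<k. \<alpha> i))" for k
  proof (induction k)
    case 0 then show ?case using lam0 by simp
  next
    case (Suc k)
    have "lam (Suc k) = (1 - \<alpha> k) * lam k" by (rule lam_rec)
    also have "\<dots> \<le> exp (- \<alpha> k) * exp (- (\<Sum>i<k. \<alpha> i))"
      using Suc alpha_range[of k] lam_nn[of k] exp_ge_add_one_self[of "- \<alpha> k"]
      by (intro mult_mono) auto
    also have "\<dots> = exp (- (\<Sum>i<Suc k. \<alpha> i))" by (simp add: exp_add[symmetric])
    finally show ?case .
  qed
  have "filterlim (\<lambda>n. - (\<Sum>k<n. \<alpha> k)) at_bot sequentially"
    using filterlim_uminus_at_top[THEN iffD1, OF alpha_div] .
  then have e0: "(\<lambda>n. exp (- (\<Sum>k<n. \<alpha> k))) \<longlonglongrightarrow> 0"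
    by (rule filterlim_compose[OF exp_at_bot])
  have lim: "lam \<longlonglongrightarrow> 0"
    by (rule tendsto_sandwich[OF _ _ tendsto_const e0]) (auto simp: lam_nn lam_le)
  have est: "phi k x \<le> (1 - lam k) * (f x + p x) + lam k * phi 0 x" for k x
  proof (induction k)
    case 0 then show ?case using lam0 by simp
  next
    case (Suc k)
    define L where "L = f (xs k) + p (xs k) + (Hmat \<sigma> (u k) *v (y k - xs k)) \<bullet> (x - y k)
         + (1 / (2 * \<sigma>)) * (norm (Hmat \<sigma> (u k) *v (y k - xs k)))\<^sup>2"
    have L: "L \<le> f x + p x" using keyk[of k x] unfolding L_def by simp
    have a: "0 < \<alpha> k" "\<alpha> k < 1" using alpha_range[of k] by auto
    have "phi (Suc k) x = (1 - \<alpha> k) * phi k x + \<alpha> k * L" unfolding L_def by (rule phi_rec)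
    also have "\<dots> \<le> (1 - \<alpha> k) * ((1 - lam k) * (f x + p x) + lam k * phi 0 x) + \<alpha> k * (f x + p x)"
      using a Suc L by (intro add_mono mult_left_mono) auto
    also have "\<dots> = (1 - lam (Suc k)) * (f x + p x) + lam (Suc k) * phi 0 x"
      by (simp add: lam_rec algebra_simps)
    finally show ?case .
  qed
  show ?thesis unfolding estimate_sequence_def using lam_nn lim est by blast
qed

end
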